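(* For causal stable systems $P_1,P_2:\mathcal{L}_{2e+}^n\to\mathcal{L}_{2e+}^n$, the cascaded system $P=P_2P_1$ satisfies $$\theta(P)\le\theta(P_1)+\theta(P_2).$$
   Context: For $n\ge1$, $\mathcal{L}_2^n$ is the set of measurable $u:\mathbb{R}\to\mathbb{R}^n$ with $\|u\|_2^2=\int_{-\infty}^{\infty}|u(t)|^2dt<\infty$, with inner product $\langle u,v\rangle=\int u(t)^Tv(t)\,dt$; $\mathcal{L}_{2+}=\{u\in\mathcal{L}_2: u(t)=0\ \text{for}\ t<0\}$. For $T\ge0$, $(\Gamma_Tu)(t)=u(t)$ for $t\le T$ and $0$ for $t>T$; $\mathcal{L}_{2e+}=\{u: \Gamma_Tu\in\mathcal{L}_{2+}\ \forall T\ge0\}$. A system is an operator $P:\mathcal{L}_{2e+}\to\mathcal{L}_{2e+}$ with $P0=0$, $P\ne0$; it is causal if $\Gamma_TP=\Gamma_TP\Gamma_T$ for all $T\ge0$, and a causal system is stable if $Pu\in\mathcal{L}_{2+}$ for all $u\in\mathcal{L}_{2+}$ and $\sup_{0\ne u\in\mathcal{L}_{2+}}\|Pu\|_2/\|u\|_2<\infty$. The singular angle of a causal stable system $P$ is $\theta(P)\in[0,\pi]$ with $\cos\theta(P)=\inf\{\langle u,Pu\rangle/(\|u\|_2\|Pu\|_2): 0\neq u\in\mathcal{L}_{2+},\ Pu\neq0\}$. *)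

theory Defs
  imports "HOL-Analysis.Analysis"
begin

type_synonym 'n signal = "real \<Rightarrow> real ^ 'n"

definition L2 :: "'n::finite signal set" where
  "L2 = {u. u \<in> borel_measurable lborel \<and> integrable lborel (\<lambda>t. (norm (u t))\<^sup>2)}"

definition L2p :: "'n::finite signal set" where
  "L2p = {u \<in> L2. \<forall>t<0. u t = 0}"

definition trunc :: "real \<Rightarrow> 'n::finite signal \<Rightarrow> 'n signal" where
  "trunc T u = (\<lambda>t. if t \<le> T then u t else 0)"

definition L2ep :: "'n::finite signal set" where
  "L2ep = {u. \<forall>T\<ge>0. trunc T u \<in> L2p}"

definition l2_inner :: "'n::finite signal \<Rightarrow> 'n signal \<Rightarrow> real" where
  "l2_inner u v = (LINT t|lborel. u t \<bullet> v t)"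

definition l2_norm :: "'n::finite signal \<Rightarrow> real" where
  "l2_norm u = sqrt (LINT t|lborel. (norm (u t))\<^sup>2)"

definition is_system :: "('n::finite signal \<Rightarrow> 'n signal) \<Rightarrow> bool" where
  "is_system P \<longleftrightarrow> (\<forall>u\<in>L2ep. P u \<in> L2ep) \<and> P (\<lambda>_. 0) = (\<lambda>_. 0)
     \<and> (\<exists>u\<in>L2ep. \<exists>T\<ge>0. l2_norm (trunc T (P u)) \<noteq> 0)"

definition causal :: "('n::finite signal \<Rightarrow> 'n signal) \<Rightarrow> bool" where
  "causal P \<longleftrightarrow> is_system P \<and> (\<forall>T\<ge>0. \<forall>u\<in>L2ep. trunc T (P u) = trunc T (P (trunc T u)))"

definition stable :: "('n::finite signal \<Rightarrow> 'n signal) \<Rightarrow> bool" where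
  "stable P \<longleftrightarrow> causal P \<and> (\<forall>u\<in>L2p. P u \<in> L2p)
     \<and> (\<exists>c. \<forall>u\<in>L2p. l2_norm (P u) \<le> c * l2_norm u)"

definition singular_angle :: "('n::finite signal \<Rightarrow> 'n signal) \<Rightarrow> real" where
  "singular_angle P = arccos (Inf {l2_inner u (P u) / (l2_norm u * l2_norm (P u)) | u.
      u \<in> L2p \<and> l2_norm u \<noteq> 0 \<and> l2_norm (P u) \<noteq> 0})"

end

theory Submission
  imports Defs
begin


lemma l2_norm_nonneg: "0 \<le> l2_norm u"
  unfolding l2_norm_def by simp

lemma l2_norm_sq: "(l2_norm u)^2 = (LINT t|lborel. (norm (u t))\<^sup>2)"
  unfolding l2_norm_def by (simp add: integral_nonneg)

lemma ab_le: "(a::real) * b \<le> a\<^sup>2 + b\<^sup>2" if "0 \<le> a" "0 \<le> b" for a b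
proof -
  have "0 \<le> (a - b)\<^sup>2" by simp
  hence "2 * (a * b) \<le> a\<^sup>2 + b\<^sup>2" by (simp add: power2_eq_square algebra_simps)
  moreover have "0 \<le> a * b" using that by simp
  ultimately show ?thesis by linarith
qed

lemma L2_inner_int:
  assumes "u \<in> L2" "v \<in> L2"
  shows "integrable lborel (\<lambda>t. u t \<bullet> v t)"
proof (rule Bochner_Integration.integrable_bound[where f="\<lambda>t. (norm (u t))\<^sup>2 + (norm (v t))\<^sup>2"])
  show "integrable lborel (\<lambda>t. (norm (u t))\<^sup>2 + (norm (v t))\<^sup>2)"
    using assms unfolding L2_def by auto
  show "(\<lambda>t. u t \<bullet> v t) \<in> borel_measurable lborel"
    using assms unfolding L2_def by auto
  show "AE x in lborel. norm (u x \<bullet> v x) \<le> norm ((norm (u x))\<^sup>2 + (norm (v x))\<^sup>2)"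
  proof (intro AE_I2)
    fix x
    have "\<bar>u x \<bullet> v x\<bar> \<le> norm (u x) * norm (v x)" by (rule Cauchy_Schwarz_ineq2)
    also have "\<dots> \<le> (norm (u x))\<^sup>2 + (norm (v x))\<^sup>2"
      by (rule ab_le) simp_all
    finally show "norm (u x \<bullet> v x) \<le> norm ((norm (u x))\<^sup>2 + (norm (v x))\<^sup>2)" by simp
  qed
qed

lemma L2_sq_int: "u \<in> L2 \<Longrightarrow> integrable lborel (\<lambda>t. (norm (u t))\<^sup>2)"
  unfolding L2_def by auto

lemma pt: "(norm (s *\<^sub>R a + t *\<^sub>R b + r *\<^sub>R (c::real^'n)))\<^sup>2 =
     s^2 * (norm a)\<^sup>2 + t^2 * (norm b)\<^sup>2 + r^2 * (norm c)\<^sup>2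
     + 2 * s * t * (a \<bullet> b) + 2 * s * r * (a \<bullet> c) + 2 * t * r * (b \<bullet> c)"
  unfolding power2_norm_eq_inner inner_add_left inner_add_right inner_scaleR_left inner_scaleR_right
  by (simp add: inner_commute[of b a] inner_commute[of c a] inner_commute[of c b] power2_eq_square algebra_simps)

lemma int6:
  fixes f1 f2 f3 f4 f5 f6 :: "real \<Rightarrow> real"
  assumes "integrable lborel f1" "integrable lborel f2" "integrable lborel f3"
    "integrable lborel f4" "integrable lborel f5" "integrable lborel f6"
  shows "(LINT x|lborel. c1 * f1 x + c2 * f2 x + c3 * f3 x + c4 * f4 x + c5 * f5 x + c6 * f6 x)
    = c1 * integral\<^sup>L lborel f1 + c2 * integral\<^sup>L lborel f2 + c3 * integral\<^sup>L lborel f3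
     + c4 * integral\<^sup>L lborel f4 + c5 * integral\<^sup>L lborel f5 + c6 * integral\<^sup>L lborel f6"
proof -
  note I = integrable_mult_right[OF assms(1), of c1] integrable_mult_right[OF assms(2), of c2]
    integrable_mult_right[OF assms(3), of c3] integrable_mult_right[OF assms(4), of c4]
    integrable_mult_right[OF assms(5), of c5] integrable_mult_right[OF assms(6), of c6]
  have J1: "integrable lborel (\<lambda>x. c1 * f1 x + c2 * f2 x)" using I using assms by auto
  have J2: "integrable lborel (\<lambda>x. c1 * f1 x + c2 * f2 x + c3 * f3 x)" using I J1 using assms by auto
  have J3: "integrable lborel (\<lambda>x. c1 * f1 x + c2 * f2 x + c3 * f3 x + c4 * f4 x)" using I J2 using assms by auto
  have J4: "integrable lborel (\<lambda>x. c1 * f1 x + c2 * f2 x + c3 * f3 x + c4 * f4 x + c5 * f5 x)" using I J3 using assms by auto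
  show ?thesis
    apply (subst Bochner_Integration.integral_add[OF J4 I(6)])
    apply (subst Bochner_Integration.integral_add[OF J3 I(5)])
    apply (subst Bochner_Integration.integral_add[OF J2 I(4)])
    apply (subst Bochner_Integration.integral_add[OF J1 I(3)])
    apply (subst Bochner_Integration.integral_add[OF I(1) I(2)])
    using assms by simp
qed

lemma quad_nonneg:
  assumes "u \<in> L2" "v \<in> L2" "w \<in> L2"
  shows "0 \<le> s^2 * (l2_norm u)^2 + t^2 * (l2_norm v)^2 + r^2 * (l2_norm w)^2
     + 2 * s * t * l2_inner u v + 2 * s * r * l2_inner u w + 2 * t * r * l2_inner v w"
proof -
  have iu: "integrable lborel (\<lambda>t. (norm (u t))\<^sup>2)" "integrable lborel (\<lambda>t. (norm (v t))\<^sup>2)"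
     "integrable lborel (\<lambda>t. (norm (w t))\<^sup>2)"
    using assms by (auto intro: L2_sq_int)
  have ii: "integrable lborel (\<lambda>t. u t \<bullet> v t)" "integrable lborel (\<lambda>t. u t \<bullet> w t)"
     "integrable lborel (\<lambda>t. v t \<bullet> w t)"
    using assms by (auto intro: L2_inner_int)
  have "0 \<le> (LINT x|lborel. (norm (s *\<^sub>R u x + t *\<^sub>R v x + r *\<^sub>R w x))\<^sup>2)"
    by simp
  also have "\<dots> = (LINT x|lborel. s^2 * (norm (u x))\<^sup>2 + t^2 * (norm (v x))\<^sup>2 + r^2 * (norm (w x))\<^sup>2
     + 2 * s * t * (u x \<bullet> v x) + 2 * s * r * (u x \<bullet> w x) + 2 * t * r * (v x \<bullet> w x))"
    by (simp only: pt)
  also have "\<dots> = s^2 * (l2_norm u)^2 + t^2 * (l2_norm v)^2 + r^2 * (l2_norm w)^2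
     + 2 * s * t * l2_inner u v + 2 * s * r * l2_inner u w + 2 * t * r * l2_inner v w"
    unfolding l2_norm_sq l2_inner_def by (rule int6[OF iu ii])
  finally show ?thesis .
qed



lemma alg:
  fixes x y z :: real
  assumes H: "\<And>a b c. 0 \<le> a\<^sup>2 + b\<^sup>2 + c\<^sup>2 + 2 * a * b * x + 2 * a * c * z + 2 * b * c * y"
  shows "-1 \<le> x" "x \<le> 1" "-1 \<le> y" "y \<le> 1"
    "x * y - sqrt (1 - x\<^sup>2) * sqrt (1 - y\<^sup>2) \<le> z"
proof -
  show "-1 \<le> x" using H[of 1 1 0] by simp
  show "x \<le> 1" using H[of 1 "-1" 0] by simp
  show "-1 \<le> y" using H[of 0 1 1] by simp
  show "y \<le> 1" using H[of 0 1 "-1"] by simp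
  have x2: "x\<^sup>2 \<le> 1" using \<open>-1 \<le> x\<close> \<open>x \<le> 1\<close> by (simp add: abs_square_le_1)
  have y2: "y\<^sup>2 \<le> 1" using \<open>-1 \<le> y\<close> \<open>y \<le> 1\<close> by (simp add: abs_square_le_1)
  have G: "0 \<le> a\<^sup>2 * (1 - x\<^sup>2) + c\<^sup>2 * (1 - y\<^sup>2) + 2 * a * c * (z - x * y)" for a c
  proof -
    have "0 \<le> a\<^sup>2 + (-(a*x + c*y))\<^sup>2 + c\<^sup>2 + 2 * a * (-(a*x + c*y)) * x + 2 * a * c * z + 2 * (-(a*x + c*y)) * c * y"
      by (rule H)
    also have "\<dots> = a\<^sup>2 * (1 - x\<^sup>2) + c\<^sup>2 * (1 - y\<^sup>2) + 2 * a * c * (z - x * y)"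
      by (simp add: power2_eq_square algebra_simps)
    finally show ?thesis .
  qed
  define P where "P = sqrt (1 - x\<^sup>2)"
  define Q where "Q = sqrt (1 - y\<^sup>2)"
  have P2: "P\<^sup>2 = 1 - x\<^sup>2" "0 \<le> P" unfolding P_def using x2 by simp_all
  have Q2: "Q\<^sup>2 = 1 - y\<^sup>2" "0 \<le> Q" unfolding Q_def using y2 by simp_all
  show "x * y - sqrt (1 - x\<^sup>2) * sqrt (1 - y\<^sup>2) \<le> z"
    unfolding P_def[symmetric] Q_def[symmetric]
  proof (rule ccontr)
    assume "\<not> x * y - P * Q \<le> z"
    hence d: "z - x * y < - (P * Q)" by simp
    define d where "d = z - x * y"
    have dneg: "d < 0" using d P2 Q2 unfolding d_def by (smt (verit) mult_nonneg_nonneg)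
    show False
    proof (cases "P * Q = 0")
      case True
      then consider "P = 0" | "Q = 0" by auto
      then show False
      proof cases
        case 1
        have "0 \<le> 1\<^sup>2 * (1 - x\<^sup>2) + (-d)\<^sup>2 * (1 - y\<^sup>2) + 2 * 1 * (-d) * d"
          using G[of 1 "-d"] unfolding d_def by simp
        moreover have "(-d)\<^sup>2 * (1 - y\<^sup>2) \<le> d\<^sup>2"
          using Q2 by (simp add: mult_left_le)
        moreover have "0 < d\<^sup>2" using dneg by simp
        moreover have "x\<^sup>2 = 1" using 1 P2 by simp
        moreover have "2 * 1 * (-d) * d = -2 * d\<^sup>2" "2 * (-d) * 1 * d = -2 * d\<^sup>2" by (simp_all add: power2_eq_square)
        ultimately show False by simp
      next
        case 2
        have "0 \<le> (-d)\<^sup>2 * (1 - x\<^sup>2) + 1\<^sup>2 * (1 - y\<^sup>2) + 2 * (-d) * 1 * d"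
          using G[of "-d" 1] unfolding d_def by simp
        moreover have "(-d)\<^sup>2 * (1 - x\<^sup>2) \<le> d\<^sup>2"
          using P2 by (simp add: mult_left_le)
        moreover have "0 < d\<^sup>2" using dneg by simp
        moreover have "y\<^sup>2 = 1" using 2 Q2 by simp
        moreover have "2 * 1 * (-d) * d = -2 * d\<^sup>2" "2 * (-d) * 1 * d = -2 * d\<^sup>2" by (simp_all add: power2_eq_square)
        ultimately show False by simp
      qed
    next
      case False
      hence pq: "0 < P * Q" using P2 Q2 by (simp add: less_le)
      have "0 \<le> Q\<^sup>2 * (1 - x\<^sup>2) + P\<^sup>2 * (1 - y\<^sup>2) + 2 * Q * P * (z - x * y)"
        by (rule G)
      also have "\<dots> = 2 * (P * Q) * (P * Q + d)"
        unfolding d_def P2(1)[symmetric] Q2(1)[symmetric] by (simp add: power2_eq_square algebra_simps)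
      finally have "0 \<le> P * Q + d" using pq by (simp add: zero_le_mult_iff)
      thus False using d unfolding d_def by simp
    qed
  qed
qed

lemma angle:
  fixes x y z c1 c2 :: real
  assumes "-1 \<le> x" "x \<le> 1" "-1 \<le> y" "y \<le> 1"
    "x * y - sqrt (1 - x\<^sup>2) * sqrt (1 - y\<^sup>2) \<le> z"
    "c1 \<le> x" "c2 \<le> y" "-1 \<le> c1" "-1 \<le> c2"
    "arccos c1 + arccos c2 \<le> pi"
  shows "cos (arccos c1 + arccos c2) \<le> z"
proof -
  have a1: "arccos x \<le> arccos c1" using assms by (intro arccos_le_arccos) auto
  have a2: "arccos y \<le> arccos c2" using assms by (intro arccos_le_arccos) auto
  have "cos (arccos x + arccos y) = x * y - sqrt (1 - x\<^sup>2) * sqrt (1 - y\<^sup>2)"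
    using assms by (simp add: cos_add sin_arccos)
  moreover have "cos (arccos c1 + arccos c2) \<le> cos (arccos x + arccos y)"
    apply (rule cos_monotone_0_pi_le)
    using a1 a2 assms arccos_lbound[of x] arccos_lbound[of y] by auto
  ultimately show ?thesis using assms by linarith
qed



lemma trunc_ind: "trunc T u = (\<lambda>t. indicator {..T} t *\<^sub>R u t)"
  unfolding trunc_def by (auto simp: indicator_def)

lemma trunc_L2p: assumes "u \<in> L2p" shows "trunc T u \<in> L2p"
proof -
  have m: "u \<in> borel_measurable lborel" and i: "integrable lborel (\<lambda>t. (norm (u t))\<^sup>2)"
    and z: "\<forall>t<0. u t = 0"
    using assms unfolding L2p_def L2_def by auto
  have m2: "trunc T u \<in> borel_measurable lborel"
    unfolding trunc_ind using m by (intro borel_measurable_scaleR) auto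
  have i2: "integrable lborel (\<lambda>t. (norm (trunc T u t))\<^sup>2)"
  proof (rule Bochner_Integration.integrable_bound[OF i])
    show "(\<lambda>t. (norm (trunc T u t))\<^sup>2) \<in> borel_measurable lborel" using m2 by measurable
    show "AE x in lborel. norm ((norm (trunc T u x))\<^sup>2) \<le> norm ((norm (u x))\<^sup>2)"
      by (intro AE_I2) (simp add: trunc_def)
  qed
  show ?thesis using m2 i2 z unfolding L2p_def L2_def by (auto simp: trunc_def)
qed

lemma L2p_L2ep: "u \<in> L2p \<Longrightarrow> u \<in> L2ep"
  unfolding L2ep_def using trunc_L2p by blast

lemma L2p_L2: "u \<in> L2p \<Longrightarrow> u \<in> L2"
  unfolding L2p_def by auto

lemma trunc_norm_le: assumes "u \<in> L2p" shows "l2_norm (trunc T u) \<le> l2_norm u"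
proof -
  have "(LINT t|lborel. (norm (trunc T u t))\<^sup>2) \<le> (LINT t|lborel. (norm (u t))\<^sup>2)"
    apply (rule integral_mono)
    using trunc_L2p[OF assms, of T] assms unfolding L2p_def L2_def by (auto simp: trunc_def)
  thus ?thesis unfolding l2_norm_def by simp
qed

lemma stable_zero:
  assumes "stable P" "u \<in> L2p" "l2_norm u = 0" shows "l2_norm (P u) = 0"
proof -
  obtain c where "\<forall>u\<in>L2p. l2_norm (P u) \<le> c * l2_norm u" using assms unfolding stable_def by blast
  hence "l2_norm (P u) \<le> 0" using assms by force
  moreover have "0 \<le> l2_norm (P u)" unfolding l2_norm_def by simp
  ultimately show ?thesis by simp
qed



lemma key3:
  assumes "u \<in> L2" "v \<in> L2" "w \<in> L2" "l2_norm u \<noteq> 0" "l2_norm v \<noteq> 0" "l2_norm w \<noteq> 0"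
  shows "0 \<le> a\<^sup>2 + b\<^sup>2 + c\<^sup>2 + 2 * a * b * (l2_inner u v / (l2_norm u * l2_norm v))
    + 2 * a * c * (l2_inner u w / (l2_norm u * l2_norm w)) + 2 * b * c * (l2_inner v w / (l2_norm v * l2_norm w))"
proof -
  note q = quad_nonneg[OF assms(1-3), of "a / l2_norm u" "b / l2_norm v" "c / l2_norm w"]
  have e1: "(a / l2_norm u)^2 * (l2_norm u)^2 = a\<^sup>2" using assms by (simp add: power_divide)
  have e2: "(b / l2_norm v)^2 * (l2_norm v)^2 = b\<^sup>2" using assms by (simp add: power_divide)
  have e3: "(c / l2_norm w)^2 * (l2_norm w)^2 = c\<^sup>2" using assms by (simp add: power_divide)
  have e4: "2 * (a / l2_norm u) * (b / l2_norm v) * l2_inner u v = 2 * a * b * (l2_inner u v / (l2_norm u * l2_norm v))" by simp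
  have e5: "2 * (a / l2_norm u) * (c / l2_norm w) * l2_inner u w = 2 * a * c * (l2_inner u w / (l2_norm u * l2_norm w))" by simp
  have e6: "2 * (b / l2_norm v) * (c / l2_norm w) * l2_inner v w = 2 * b * c * (l2_inner v w / (l2_norm v * l2_norm w))" by simp
  show ?thesis using q unfolding e1 e2 e3 e4 e5 e6 .
qed

lemma ratio_bound:
  assumes "u \<in> L2" "v \<in> L2" "l2_norm u \<noteq> 0" "l2_norm v \<noteq> 0"
  shows "-1 \<le> l2_inner u v / (l2_norm u * l2_norm v)" "l2_inner u v / (l2_norm u * l2_norm v) \<le> 1"
  using alg(1,2)[OF key3[OF assms(1,2,2,3,4,4)]] by auto

lemma stable_L2p: "stable P \<Longrightarrow> u \<in> L2p \<Longrightarrow> P u \<in> L2p"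
  unfolding stable_def by blast

theorem proposition1:
  fixes P1 P2 :: "'n::finite signal \<Rightarrow> 'n signal"
  assumes "stable P1" and "stable P2"
    and "is_system (P2 \<circ> P1)"
  shows "singular_angle (P2 \<circ> P1) \<le> singular_angle P1 + singular_angle P2"
proof -
  define S where "S = {l2_inner u ((P2 \<circ> P1) u) / (l2_norm u * l2_norm ((P2 \<circ> P1) u)) | u.
      u \<in> L2p \<and> l2_norm u \<noteq> 0 \<and> l2_norm ((P2 \<circ> P1) u) \<noteq> 0}"
  define S1 where "S1 = {l2_inner u (P1 u) / (l2_norm u * l2_norm (P1 u)) | u.
      u \<in> L2p \<and> l2_norm u \<noteq> 0 \<and> l2_norm (P1 u) \<noteq> 0}"
  define S2 where "S2 = {l2_inner u (P2 u) / (l2_norm u * l2_norm (P2 u)) | u.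
      u \<in> L2p \<and> l2_norm u \<noteq> 0 \<and> l2_norm (P2 u) \<noteq> 0}"
  have th: "singular_angle (P2 \<circ> P1) = arccos (Inf S)" "singular_angle P1 = arccos (Inf S1)"
     "singular_angle P2 = arccos (Inf S2)"
    unfolding singular_angle_def S_def S1_def S2_def by simp_all
  have c1: "causal P1" and c2: "causal P2" using assms unfolding stable_def by auto
  have s1: "is_system P1" using c1 unfolding causal_def by auto
  
  obtain u0 T where u0: "u0 \<in> L2ep" "T \<ge> 0" "l2_norm (trunc T ((P2 \<circ> P1) u0)) \<noteq> 0"
    using assms(3) unfolding is_system_def by blast
  define w where "w = trunc T u0"
  have wL: "w \<in> L2p" using u0 unfolding w_def L2ep_def by auto
  have P1u0: "P1 u0 \<in> L2ep" using s1 u0 unfolding is_system_def by auto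
  have P1w: "P1 w \<in> L2p" using stable_L2p[OF assms(1) wL] .
  have "trunc T (P2 (P1 u0)) = trunc T (P2 (trunc T (P1 u0)))"
    using c2 u0 P1u0 unfolding causal_def by blast
  also have "trunc T (P1 u0) = trunc T (P1 w)"
    using c1 u0 unfolding causal_def w_def by blast
  also have "trunc T (P2 (trunc T (P1 w))) = trunc T (P2 (P1 w))"
    using c2 u0 L2p_L2ep[OF P1w] unfolding causal_def by metis
  finally have teq: "trunc T (P2 (P1 u0)) = trunc T (P2 (P1 w))" .
  have yL: "P2 (P1 w) \<in> L2p" using stable_L2p[OF assms(2) P1w] .
  have yn: "l2_norm (P2 (P1 w)) \<noteq> 0"
  proof
    assume "l2_norm (P2 (P1 w)) = 0"
    hence "l2_norm (trunc T (P2 (P1 w))) \<le> 0" using trunc_norm_le[OF yL, of T] by simp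
    moreover have "0 \<le> l2_norm (trunc T (P2 (P1 w)))" by (rule l2_norm_nonneg)
    ultimately show False using u0(3) teq by simp
  qed
  have wn: "l2_norm w \<noteq> 0"
    using stable_zero[OF assms(2) P1w] stable_zero[OF assms(1) wL] yn by auto
  have Sne: "S \<noteq> {}" unfolding S_def using wL wn yn by auto
  
  have memb: "l2_inner u (P1 u) / (l2_norm u * l2_norm (P1 u)) \<in> S1
      \<and> l2_inner (P1 u) (P2 (P1 u)) / (l2_norm (P1 u) * l2_norm (P2 (P1 u))) \<in> S2
      \<and> P1 u \<in> L2p \<and> P2 (P1 u) \<in> L2p \<and> l2_norm (P1 u) \<noteq> 0"
    if "u \<in> L2p" "l2_norm u \<noteq> 0" "l2_norm (P2 (P1 u)) \<noteq> 0" for u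
  proof -
    have a: "P1 u \<in> L2p" using stable_L2p[OF assms(1) that(1)] .
    have b: "P2 (P1 u) \<in> L2p" using stable_L2p[OF assms(2) a] .
    have n: "l2_norm (P1 u) \<noteq> 0" using stable_zero[OF assms(2) a] that(3) by auto
    show ?thesis unfolding S1_def S2_def using a b n that by blast
  qed
  have S1ne: "S1 \<noteq> {}" using memb[OF wL wn yn] by auto
  have S2ne: "S2 \<noteq> {}" using memb[OF wL wn yn] by auto
  have S1b: "\<forall>x\<in>S1. -1 \<le> x \<and> x \<le> 1" unfolding S1_def
    using ratio_bound L2p_L2 stable_L2p[OF assms(1)] by blast
  have S2b: "\<forall>x\<in>S2. -1 \<le> x \<and> x \<le> 1" unfolding S2_def
    using ratio_bound L2p_L2 stable_L2p[OF assms(2)] by blast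
  have Sb: "\<forall>x\<in>S. -1 \<le> x \<and> x \<le> 1" unfolding S_def
    using ratio_bound L2p_L2 stable_L2p[OF assms(2)] stable_L2p[OF assms(1)] by fastforce
  have bdd: "bdd_below S1" "bdd_below S2" "bdd_below S"
    using S1b S2b Sb unfolding bdd_below_def by auto
  have I1: "-1 \<le> Inf S1" "Inf S1 \<le> 1" using S1ne S1b cInf_greatest[OF S1ne, of "-1"]
    by (auto intro: order_trans[OF cInf_lower[OF _ bdd(1)]])
  have I2: "-1 \<le> Inf S2" "Inf S2 \<le> 1" using S2ne S2b cInf_greatest[OF S2ne, of "-1"]
    by (auto intro: order_trans[OF cInf_lower[OF _ bdd(2)]])
  have I: "-1 \<le> Inf S" "Inf S \<le> 1" using Sne Sb cInf_greatest[OF Sne, of "-1"]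
    by (auto intro: order_trans[OF cInf_lower[OF _ bdd(3)]])
  have t1: "0 \<le> arccos (Inf S1)" using I1 arccos_lbound by blast
  have t2: "0 \<le> arccos (Inf S2)" using I2 arccos_lbound by blast
  show ?thesis
  proof (cases "arccos (Inf S1) + arccos (Inf S2) \<le> pi")
    case False
    then show ?thesis using th arccos_ubound[OF I] by linarith
  next
    case True
    have "cos (arccos (Inf S1) + arccos (Inf S2)) \<le> z" if zS: "z \<in> S" for z
    proof -
      obtain u where u: "z = l2_inner u (P2 (P1 u)) / (l2_norm u * l2_norm (P2 (P1 u)))"
        "u \<in> L2p" "l2_norm u \<noteq> 0" "l2_norm (P2 (P1 u)) \<noteq> 0"
        using zS unfolding S_def by auto
      note m = memb[OF u(2-4)]
      have uL: "u \<in> L2" "P1 u \<in> L2" "P2 (P1 u) \<in> L2" using m u L2p_L2 by auto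
      note k = key3[OF uL u(3) conjunct2[OF conjunct2[OF conjunct2[OF conjunct2[OF m]]]] u(4)]
      show ?thesis
        unfolding u(1)
        apply (rule angle[OF alg[OF k]])
        using m cInf_lower[OF _ bdd(1)] cInf_lower[OF _ bdd(2)] I1 I2 True by auto
    qed
    hence "cos (arccos (Inf S1) + arccos (Inf S2)) \<le> Inf S"
      using Sne by (intro cInf_greatest) auto
    hence "arccos (Inf S) \<le> arccos (cos (arccos (Inf S1) + arccos (Inf S2)))"
      using I by (intro arccos_le_arccos) auto
    also have "\<dots> = arccos (Inf S1) + arccos (Inf S2)"
      using t1 t2 True by (intro arccos_cos) auto
    finally show ?thesis using th by simp
  qed
qed

end
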